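(* Let $U\subset\mathbb{R}^2$ be open, let $x:U\to\mathbb{R}^3$ be smooth and let $\xi:U\to S^2$ be a frontal. Let $\Omega$ be a tangent moving basis of $\xi$, let $D\xi=\Omega\Delta_\Omega^T$, and let $q\in U\setminus\Sigma(\xi)$. Then for every $b=(b_1,b_2)^T\in\mathbb{R}^2\setminus\{0\}$, setting $a^T=(a_1,a_2)=b^T\Delta_\Omega(q)^{-1}$ and $\delta_\Omega=\det\Delta_\Omega(q)$, one has $$\delta_\Omega\,\mathscr{K}_q(a_1,a_2)=\mathscr{K}_q^{\Omega}(b_1,b_2).$$
   Context: A smooth map $f:U\to\mathbb{R}^3$ is a frontal if locally there is a smooth unit vector field along $f$ orthogonal to $f_{u_1},f_{u_2}$; $\Sigma(f)=\{u\in U: f \text{ is not immersive at } u\}$. A tangent moving basis of $\xi$ is a smooth $\Omega=(w_1\ w_2):U\to M_{3\times2}(\mathbb{R})$ with linearly independent columns such that $\xi_{u_1},\xi_{u_2}\in\mathrm{span}(w_1,w_2)$; then $D\xi=\Omega\Delta_\Omega^T$ for a unique smooth $2\times 2$ matrix valued $\Delta_\Omega$, and $\Sigma(\xi)=(\det\Delta_\Omega)^{-1}(0)$. Kummer matrices: $\boldsymbol{\mathcal{I}}=D\xi^TD\xi$, $\boldsymbol{\mathcal{II}}=-D\xi^TDx$; $\Omega$-Kummer matrices: $\boldsymbol{\mathcal{I}}_\Omega=\Omega^T\Omega$, $\boldsymbol{\mathcal{II}}_\Omega=-\Omega^TDx$. For $q\notin\Sigma(\xi)$ and $a\in\mathbb{R}^2\setminus\{0\}$,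 $\mathscr{K}_q(a)=\dfrac{a^T\boldsymbol{\mathcal{II}}(q)a}{a^T\boldsymbol{\mathcal{I}}(q)a}$. The $\Omega$-Kummer curvature function is $\mathscr{K}_q^\Omega(b)=\dfrac{b^T\boldsymbol{\mathcal{II}}_\Omega(q)\,\mathrm{adj}(\Delta_\Omega(q)^T)\,b}{b^T\boldsymbol{\mathcal{I}}_\Omega(q)b}$ for $b\in\mathbb{R}^2\setminus\{0\}$, where $\mathrm{adj}$ is the adjugate matrix. *)

theory Defs
  imports "HOL-Analysis.Analysis"
begin

definition partial_deriv :: "(real^2 \<Rightarrow> 'b::real_normed_vector) \<Rightarrow> 2 \<Rightarrow> real^2 \<Rightarrow> 'b" where
  "partial_deriv f i u = frechet_derivative f (at u) (axis i 1)"

fun Ck_on :: "nat \<Rightarrow> (real^2) set \<Rightarrow> (real^2 \<Rightarrow> 'b::real_normed_vector) \<Rightarrow> bool" where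
  "Ck_on 0 U f = continuous_on U f"
| "Ck_on (Suc k) U f = (continuous_on U f \<and> f differentiable_on U \<and>
      (\<forall>i. Ck_on k U (partial_deriv f i)))"

definition smooth_on :: "(real^2) set \<Rightarrow> (real^2 \<Rightarrow> 'b::real_normed_vector) \<Rightarrow> bool" where
  "smooth_on U f \<longleftrightarrow> (\<forall>k. Ck_on k U f)"

abbreviation Dmat :: "(real^2 \<Rightarrow> real^3) \<Rightarrow> real^2 \<Rightarrow> real^2^3" where
  "Dmat f u \<equiv> jacobian f (at u)"

definition frontal :: "(real^2) set \<Rightarrow> (real^2 \<Rightarrow> real^3) \<Rightarrow> bool" where
  "frontal U f \<longleftrightarrow> smooth_on U f \<and>
     (\<forall>p\<in>U. \<exists>V \<nu>. open V \<and> p \<in> V \<and> V \<subseteq> U \<and> smooth_on V (\<nu> :: real^2 \<Rightarrow> real^3) \<and>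
        (\<forall>u\<in>V. norm (\<nu> u) = 1 \<and> (\<forall>i. \<nu> u \<bullet> column i (Dmat f u) = 0)))"

definition Sigma_set :: "(real^2) set \<Rightarrow> (real^2 \<Rightarrow> real^3) \<Rightarrow> (real^2) set" where
  "Sigma_set U f = {u \<in> U. \<not> inj ((*v) (Dmat f u))}"

definition tangent_moving_basis :: "(real^2) set \<Rightarrow> (real^2 \<Rightarrow> real^3) \<Rightarrow> (real^2 \<Rightarrow> real^2^3) \<Rightarrow> bool" where
  "tangent_moving_basis U f \<Omega> \<longleftrightarrow> smooth_on U \<Omega> \<and>
     (\<forall>u\<in>U. (\<forall>c1 c2. c1 *\<^sub>R column 1 (\<Omega> u) + c2 *\<^sub>R column 2 (\<Omega> u) = 0 \<longrightarrow> c1 = 0 \<and> c2 = 0) \<and>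
        (\<forall>i. column i (Dmat f u) \<in> span {column 1 (\<Omega> u), column 2 (\<Omega> u)}))"

text \<open>Adjugate: adj(M)_{ij} = cofactor C_{ji} = det of M with row j replaced by e_i.\<close>
definition adjugate :: "real^'n^'n \<Rightarrow> real^'n^'n" where
  "adjugate M = (\<chi> i j. det (\<chi> k. if k = j then axis i 1 else M $ k))"

definition kummer_I :: "(real^2 \<Rightarrow> real^3) \<Rightarrow> real^2 \<Rightarrow> real^2^2" where
  "kummer_I \<xi> q = transpose (Dmat \<xi> q) ** Dmat \<xi> q"

definition kummer_II :: "(real^2 \<Rightarrow> real^3) \<Rightarrow> (real^2 \<Rightarrow> real^3) \<Rightarrow> real^2 \<Rightarrow> real^2^2" where
  "kummer_II x \<xi> q = - (transpose (Dmat \<xi> q) ** Dmat x q)"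

definition kummer_I_Omega :: "(real^2 \<Rightarrow> real^2^3) \<Rightarrow> real^2 \<Rightarrow> real^2^2" where
  "kummer_I_Omega \<Omega> q = transpose (\<Omega> q) ** \<Omega> q"

definition kummer_II_Omega :: "(real^2 \<Rightarrow> real^3) \<Rightarrow> (real^2 \<Rightarrow> real^2^3) \<Rightarrow> real^2 \<Rightarrow> real^2^2" where
  "kummer_II_Omega x \<Omega> q = - (transpose (\<Omega> q) ** Dmat x q)"

definition kummer_curv :: "(real^2 \<Rightarrow> real^3) \<Rightarrow> (real^2 \<Rightarrow> real^3) \<Rightarrow> real^2 \<Rightarrow> real^2 \<Rightarrow> real" where
  "kummer_curv x \<xi> q a = (a \<bullet> (kummer_II x \<xi> q *v a)) / (a \<bullet> (kummer_I \<xi> q *v a))"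

definition kummer_curv_Omega :: "(real^2 \<Rightarrow> real^3) \<Rightarrow> (real^2 \<Rightarrow> real^2^3) \<Rightarrow> (real^2 \<Rightarrow> real^2^2)
    \<Rightarrow> real^2 \<Rightarrow> real^2 \<Rightarrow> real" where
  "kummer_curv_Omega x \<Omega> \<Delta> q b =
     (b \<bullet> ((kummer_II_Omega x \<Omega> q ** adjugate (transpose (\<Delta> q))) *v b)) / (b \<bullet> (kummer_I_Omega \<Omega> q *v b))"

end

theory Submission
  imports Defs
begin

lemma adj2: "(A::real^2^2) ** adjugate A = det A *\<^sub>R mat 1"
  by (simp add: vec_eq_iff forall_2 matrix_matrix_mult_def sum_2 det_2 adjugate_def mat_def axis_def algebra_simps)

lemma negmv: "(- (A::real^'n^'m)) *v v = - (A *v v)"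
  by (simp add: vec_eq_iff matrix_vector_mult_def sum_negf)

lemma negmm: "(- (A::real^'n^'m)) ** B = - (A ** B)"
  by (simp add: vec_eq_iff matrix_matrix_mult_def sum_negf)

lemma minv:
  assumes "invertible (A::real^2^2)"
  shows "A ** matrix_inv A = mat 1 \<and> matrix_inv A ** A = mat 1"
  using assms unfolding invertible_def matrix_inv_def by (rule someI_ex)

theorem proposition4p2:
  fixes U :: "(real^2) set" and x \<xi> :: "real^2 \<Rightarrow> real^3"
    and \<Omega> :: "real^2 \<Rightarrow> real^2^3" and \<Delta> :: "real^2 \<Rightarrow> real^2^2"
    and q b :: "real^2"
  assumes "open U"
    and "smooth_on U x"
    and "frontal U \<xi>" and "\<forall>u\<in>U. \<xi> u \<in> sphere 0 1"
    and "tangent_moving_basis U \<xi> \<Omega>"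
    and "smooth_on U \<Delta>"
    and "\<forall>u\<in>U. Dmat \<xi> u = \<Omega> u ** transpose (\<Delta> u)"
    and "q \<in> U - Sigma_set U \<xi>"
    and "b \<noteq> 0"
  shows "det (\<Delta> q) * kummer_curv x \<xi> q (b v* matrix_inv (\<Delta> q)) = kummer_curv_Omega x \<Omega> \<Delta> q b"
proof -
  define M where "M = \<Delta> q"
  define Mi where "Mi = matrix_inv M"
  define W where "W = \<Omega> q"
  define X where "X = Dmat x q"
  define D where "D = Dmat \<xi> q"
  define a where "a = b v* Mi"
  define adj where "adj = adjugate (transpose M)"
  have qU: "q \<in> U" and inj: "inj ((*v) D)" using assms(8) unfolding Sigma_set_def D_def by auto
  have DW: "D = W ** transpose M" using assms(7) qU unfolding D_def W_def M_def by auto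
  have "\<forall>v. transpose M *v v = 0 \<longrightarrow> v = 0"
  proof (intro allI impI)
    fix v assume "transpose M *v v = 0"
    then have "D *v v = D *v 0" unfolding DW matrix_vector_mul_assoc[symmetric] by simp
    then show "v = 0" using inj by (metis injD)
  qed
  then have "invertible (transpose M)"
    using invertible_left_inverse matrix_left_invertible_ker by blast
  then have "invertible M" using transpose_invertible by fastforce
  then have MMi: "M ** Mi = mat 1" and MiM: "Mi ** M = mat 1" using minv Mi_def by auto
  have Ta: "transpose M *v a = b"
    unfolding a_def transpose_matrix_vector vector_matrix_mul_assoc MiM by simp
  have Da: "D *v a = W *v b"
    unfolding DW matrix_vector_mul_assoc[symmetric] Ta ..
  have adjeq: "adj = det M *\<^sub>R transpose Mi"
  proof -
    have "transpose Mi ** (transpose M ** adj) = transpose Mi ** (det M *\<^sub>R mat 1)"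
      unfolding adj_def adj2 det_transpose ..
    moreover have "transpose Mi ** transpose M = mat 1"
      by (metis MMi matrix_transpose_mul transpose_mat)
    ultimately show ?thesis
      by (metis matrix_mul_assoc matrix_mul_lid matrix_mul_rid matrix_scalar_ac)
  qed
  have adjb: "adj *v b = det M *\<^sub>R a"
    unfolding adjeq a_def by (metis scaleR_matrix_vector_assoc transpose_matrix_vector)
  have I1: "a \<bullet> (kummer_I \<xi> q *v a) = (W *v b) \<bullet> (W *v b)"
    unfolding kummer_I_def D_def[symmetric] matrix_vector_mul_assoc[symmetric]
      dot_lmul_matrix[symmetric] vector_transpose_matrix Da ..
  have I2: "b \<bullet> (kummer_I_Omega \<Omega> q *v b) = (W *v b) \<bullet> (W *v b)"
    unfolding kummer_I_Omega_def W_def[symmetric] matrix_vector_mul_assoc[symmetric]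
      dot_lmul_matrix[symmetric] vector_transpose_matrix ..
  have N1: "a \<bullet> (kummer_II x \<xi> q *v a) = - ((W *v b) \<bullet> (X *v a))"
  proof -
    have "a \<bullet> (kummer_II x \<xi> q *v a) = - (a \<bullet> (transpose D *v (X *v a)))"
      unfolding kummer_II_def D_def[symmetric] X_def[symmetric]
      by (simp add: matrix_vector_mul_assoc negmv negmm)
    also have "\<dots> = - ((W *v b) \<bullet> (X *v a))"
      unfolding dot_lmul_matrix[symmetric] vector_transpose_matrix Da ..
    finally show ?thesis .
  qed
  have N2: "b \<bullet> ((kummer_II_Omega x \<Omega> q ** adjugate (transpose M)) *v b)
      = - (det M * ((W *v b) \<bullet> (X *v a)))"
  proof -
    have "b \<bullet> ((kummer_II_Omega x \<Omega> q ** adjugate (transpose M)) *v b)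
        = - (b \<bullet> (transpose W *v (X *v (adj *v b))))"
      unfolding kummer_II_Omega_def W_def[symmetric] X_def[symmetric] adj_def M_def
      by (simp add: matrix_vector_mul_assoc negmv negmm matrix_mul_assoc)
    also have "\<dots> = - ((W *v b) \<bullet> (X *v (det M *\<^sub>R a)))"
      unfolding dot_lmul_matrix[symmetric] vector_transpose_matrix adjb ..
    finally show ?thesis by (simp add: matrix_vector_mult_scaleR)
  qed
  show ?thesis
    unfolding kummer_curv_def kummer_curv_Omega_def a_def[symmetric] Mi_def[symmetric] M_def[symmetric]
      N1 N2 I1 I2 by simp
qed

end
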